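(* Let $B$ be a triangular-block of a $2$-connected plane graph $G$, and let $F_1$ and $F_2$ be distinct facial cycles of $B$ that each have length at least four. Then $F_1$ and $F_2$ share at most one vertex.
   Context: A facial triangle of a plane graph $G$ is a face bounded by a triangle. Two facial triangles $F,F'$ are equivalent if there is a sequence $F=F_1,\dots,F_k=F'$ of facial triangles of $G$ such that consecutive ones share an edge. For an edge $e$ of $G$: if $e$ lies in no facial triangle, the triangular-block $B(e)$ is the subgraph consisting of $e$ and its ends; otherwise $B(e)$ is the union of all facial triangles equivalent to some facial triangle containing $e$. A triangular-block is regarded as a plane graph with the embedding inherited from $G$; its facial cycles are the cycles bounding its faces. *)

theory Defs
  imports "HOL-Analysis.Analysis"
begin

text \<open>Plane graphs are modelled geometrically: a finite simple graph with vertex set V and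
edge set E (2-element subsets of V), drawn in the plane (the complex numbers) by an injective
vertex placement pos and, for every edge, an arc joining the images of its ends; arcs meet
vertices only at their ends and meet each other only at common ends.\<close>

definition plane_graph ::
  "'v set \<Rightarrow> 'v set set \<Rightarrow> ('v \<Rightarrow> complex) \<Rightarrow> ('v set \<Rightarrow> real \<Rightarrow> complex) \<Rightarrow> bool" where
  "plane_graph V E pos c \<longleftrightarrow>
     finite V \<and> (\<forall>e\<in>E. e \<subseteq> V \<and> card e = 2) \<and> inj_on pos V \<and>
     (\<forall>e\<in>E. arc (c e) \<and> {pathstart (c e), pathfinish (c e)} = pos ` e \<and>
            path_image (c e) \<inter> pos ` V = pos ` e) \<and>
     (\<forall>e\<in>E. \<forall>e'\<in>E. e \<noteq> e' \<longrightarrow> path_image (c e) \<inter> path_image (c e') = pos ` (e \<inter> e'))"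

definition drawing ::
  "'v set \<Rightarrow> 'v set set \<Rightarrow> ('v \<Rightarrow> complex) \<Rightarrow> ('v set \<Rightarrow> real \<Rightarrow> complex) \<Rightarrow> complex set" where
  "drawing V E pos c = pos ` V \<union> (\<Union>e\<in>E. path_image (c e))"

definition faces ::
  "'v set \<Rightarrow> 'v set set \<Rightarrow> ('v \<Rightarrow> complex) \<Rightarrow> ('v set \<Rightarrow> real \<Rightarrow> complex) \<Rightarrow> complex set set" where
  "faces V E pos c = components (- drawing V E pos c)"

definition connected_graph :: "'v set \<Rightarrow> 'v set set \<Rightarrow> bool" where
  "connected_graph V E \<longleftrightarrow>
     (\<forall>x\<in>V. \<forall>y\<in>V. (\<lambda>a b. {a, b} \<in> E \<and> a \<in> V \<and> b \<in> V)\<^sup>*\<^sup>* x y)"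

definition two_connected :: "'v set \<Rightarrow> 'v set set \<Rightarrow> bool" where
  "two_connected V E \<longleftrightarrow> card V \<ge> 3 \<and> connected_graph V E \<and>
     (\<forall>x\<in>V. connected_graph (V - {x}) {e\<in>E. x \<notin> e})"

definition is_cycle :: "'v set \<Rightarrow> 'v set set \<Rightarrow> bool" where
  "is_cycle W D \<longleftrightarrow> finite W \<and> card W \<ge> 3 \<and> (\<forall>e\<in>D. e \<subseteq> W \<and> card e = 2) \<and>
     (\<forall>v\<in>W. card {e\<in>D. v \<in> e} = 2) \<and> connected_graph W D"

definition facial_cycle ::
  "'v set \<Rightarrow> 'v set set \<Rightarrow> ('v \<Rightarrow> complex) \<Rightarrow> ('v set \<Rightarrow> real \<Rightarrow> complex) \<Rightarrow>
   'v set \<Rightarrow> 'v set set \<Rightarrow> bool" where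
  "facial_cycle V E pos c W D \<longleftrightarrow> W \<subseteq> V \<and> D \<subseteq> E \<and> is_cycle W D \<and>
     (\<exists>f\<in>faces V E pos c. frontier f = drawing W D pos c)"

definition tri_edges :: "'v set \<Rightarrow> 'v set set" where
  "tri_edges T = {e. e \<subseteq> T \<and> card e = 2}"

definition facial_triangle ::
  "'v set \<Rightarrow> 'v set set \<Rightarrow> ('v \<Rightarrow> complex) \<Rightarrow> ('v set \<Rightarrow> real \<Rightarrow> complex) \<Rightarrow> 'v set \<Rightarrow> bool" where
  "facial_triangle V E pos c T \<longleftrightarrow> card T = 3 \<and> facial_cycle V E pos c T (tri_edges T)"

definition tri_equiv ::
  "'v set \<Rightarrow> 'v set set \<Rightarrow> ('v \<Rightarrow> complex) \<Rightarrow> ('v set \<Rightarrow> real \<Rightarrow> complex) \<Rightarrow>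
   'v set \<Rightarrow> 'v set \<Rightarrow> bool" where
  "tri_equiv V E pos c T T' \<longleftrightarrow> facial_triangle V E pos c T \<and>
     (\<lambda>A B. facial_triangle V E pos c A \<and> facial_triangle V E pos c B \<and>
            tri_edges A \<inter> tri_edges B \<noteq> {})\<^sup>*\<^sup>* T T'"

definition tri_block ::
  "'v set \<Rightarrow> 'v set set \<Rightarrow> ('v \<Rightarrow> complex) \<Rightarrow> ('v set \<Rightarrow> real \<Rightarrow> complex) \<Rightarrow>
   'v set \<Rightarrow> 'v set \<times> 'v set set" where
  "tri_block V E pos c e =
     (if \<not> (\<exists>T. facial_triangle V E pos c T \<and> e \<in> tri_edges T) then (e, {e})
      else (let Ts = {T'. \<exists>T. facial_triangle V E pos c T \<and> e \<in> tri_edges T \<and>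
                              tri_equiv V E pos c T T'}
            in (\<Union>Ts, \<Union>(tri_edges ` Ts))))"

end

theory Submission
  imports Defs
begin

locale pg =
  fixes V :: "'v set" and E :: "'v set set" and pos :: "'v \<Rightarrow> complex"
    and c :: "'v set \<Rightarrow> real \<Rightarrow> complex"
  assumes pg: "plane_graph V E pos c"
begin

lemma pgH: "finite V \<and> (\<forall>e\<in>E. e \<subseteq> V \<and> card e = 2) \<and> inj_on pos V \<and>
     (\<forall>e\<in>E. arc (c e) \<and> {pathstart (c e), pathfinish (c e)} = pos ` e \<and>
            path_image (c e) \<inter> pos ` V = pos ` e) \<and>
     (\<forall>e\<in>E. \<forall>e'\<in>E. e \<noteq> e' \<longrightarrow> path_image (c e) \<inter> path_image (c e') = pos ` (e \<inter> e'))"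
  using pg unfolding plane_graph_def .

lemma finV: "finite V" using pgH by (elim conjE)
lemma edgeV: "e \<in> E \<Longrightarrow> e \<subseteq> V" using pgH by (elim conjE) (drule bspec, assumption, elim conjE)
lemma edge2: "e \<in> E \<Longrightarrow> card e = 2" using pgH by (elim conjE) (drule bspec, assumption, elim conjE)
lemma injpos: "inj_on pos V" using pgH by (elim conjE)
lemma arcc: "e \<in> E \<Longrightarrow> arc (c e)" using pgH by (elim conjE) (drule bspec, assumption, elim conjE)
lemma ends: "e \<in> E \<Longrightarrow> {pathstart (c e), pathfinish (c e)} = pos ` e"
  using pgH by (elim conjE) (drule bspec, assumption, elim conjE)
lemma meetV: "e \<in> E \<Longrightarrow> path_image (c e) \<inter> pos ` V = pos ` e"
  using pgH by (elim conjE) (drule bspec, assumption, elim conjE)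
lemma meetE: "e \<in> E \<Longrightarrow> e' \<in> E \<Longrightarrow> e \<noteq> e' \<Longrightarrow>
   path_image (c e) \<inter> path_image (c e') = pos ` (e \<inter> e')"
  using pgH by (elim conjE) (drule bspec, assumption, drule bspec, assumption, blast)

lemma finE: "finite E"
proof -
  have "E \<subseteq> Pow V" using edgeV by blast
  then show ?thesis using finV by (simp add: finite_subset)
qed

lemma pos_eq: "x \<in> V \<Longrightarrow> y \<in> V \<Longrightarrow> pos x = pos y \<longleftrightarrow> x = y"
  using injpos by (meson inj_on_eq_iff)

lemma vert_on_arc: "e \<in> E \<Longrightarrow> x \<in> V \<Longrightarrow> pos x \<in> path_image (c e) \<longleftrightarrow> x \<in> e"
proof -
  assume e: "e \<in> E" and x: "x \<in> V"
  show ?thesis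
  proof
    assume "pos x \<in> path_image (c e)"
    then have "pos x \<in> path_image (c e) \<inter> pos ` V" using x by simp
    then have "pos x \<in> pos ` e" using meetV[OF e] by simp
    then obtain y where "y \<in> e" "pos x = pos y" by blast
    moreover have "y \<in> V" using \<open>y \<in> e\<close> edgeV[OF e] by (rule subsetD[rotated])
    ultimately show "x \<in> e" using pos_eq[OF x \<open>y \<in> V\<close>] by simp
  next
    assume "x \<in> e"
    then have "pos x \<in> pos ` e" by simp
    then have "pos x \<in> path_image (c e) \<inter> pos ` V" using meetV[OF e] by simp
    then show "pos x \<in> path_image (c e)" by simp
  qed
qed

definition inner_pts :: "'v set \<Rightarrow> complex set" where
  "inner_pts e = path_image (c e) - pos ` e"

lemma inner_notV: "e \<in> E \<Longrightarrow> p \<in> inner_pts e \<Longrightarrow> p \<notin> pos ` V"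
proof
  assume "e \<in> E" "p \<in> inner_pts e" "p \<in> pos ` V"
  then have "p \<in> path_image (c e) \<inter> pos ` V" "p \<notin> pos ` e" unfolding inner_pts_def by auto
  then show False using meetV[OF \<open>e \<in> E\<close>] by simp
qed

lemma inner_notE: "e \<in> E \<Longrightarrow> e' \<in> E \<Longrightarrow> e \<noteq> e' \<Longrightarrow> p \<in> inner_pts e \<Longrightarrow> p \<notin> path_image (c e')"
proof
  assume e: "e \<in> E" "e' \<in> E" "e \<noteq> e'" "p \<in> inner_pts e" "p \<in> path_image (c e')"
  then have "p \<in> path_image (c e) \<inter> path_image (c e')" unfolding inner_pts_def by simp
  then have "p \<in> pos ` (e \<inter> e')" using meetE[OF e(1,2,3)] by simp
  then show False using e(4) unfolding inner_pts_def by blast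
qed

lemma mid_inner: "e \<in> E \<Longrightarrow> c e (1/2) \<in> inner_pts e"
proof -
  assume e: "e \<in> E"
  have a: "arc (c e)" by (rule arcc[OF e])
  then have inj: "inj_on (c e) {0..1}" by (simp add: arc_def)
  have h: "(1/2::real) \<in> {0..1}" by simp
  have "c e (1/2) \<in> path_image (c e)" unfolding path_image_def using h by (rule imageI)
  moreover have "c e (1/2) \<noteq> c e 0"
  proof
    assume eq: "c e (1/2) = c e 0"
    have "(1/2::real) = 0" by (rule inj_onD[OF inj eq h]) simp
    then show False by simp
  qed
  moreover have "c e (1/2) \<noteq> c e 1"
  proof
    assume eq: "c e (1/2) = c e 1"
    have "(1/2::real) = 1" by (rule inj_onD[OF inj eq h]) simp
    then show False by simp
  qed
  moreover have "pos ` e = {c e 0, c e 1}" using ends[OF e] unfolding pathstart_def pathfinish_def by simp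
  ultimately show ?thesis unfolding inner_pts_def by simp
qed

lemma compact_arc: "e \<in> E \<Longrightarrow> compact (path_image (c e))"
  using arcc arc_imp_path compact_path_image by blast

lemma connected_arc: "e \<in> E \<Longrightarrow> connected (path_image (c e))"
  using arcc arc_imp_path connected_path_image by blast

lemma end_in_arc: "e \<in> E \<Longrightarrow> x \<in> e \<Longrightarrow> pos x \<in> path_image (c e)"
  using meetV by blast

lemma compact_drawing: "finite W \<Longrightarrow> finite D \<Longrightarrow> D \<subseteq> E \<Longrightarrow> compact (drawing W D pos c)"
proof -
  assume a: "finite W" "finite D" "D \<subseteq> E"
  have "compact (pos ` W)" using a by (simp add: finite_imp_compact)
  moreover have "compact (\<Union>e\<in>D. path_image (c e))"
    using a compact_arc by (intro compact_UN) auto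
  ultimately show ?thesis unfolding drawing_def by (rule compact_Un)
qed

lemma drawing_vert:
  assumes "W \<subseteq> V" "D \<subseteq> E" "\<forall>e\<in>D. e \<subseteq> W" "x \<in> V"
  shows "pos x \<in> drawing W D pos c \<longleftrightarrow> x \<in> W"
proof
  assume "pos x \<in> drawing W D pos c"
  then consider "pos x \<in> pos ` W" | e where "e \<in> D" "pos x \<in> path_image (c e)"
    unfolding drawing_def by blast
  then show "x \<in> W"
  proof cases
    case 1 then show ?thesis using assms pos_eq by blast
  next
    case 2 then show ?thesis using assms vert_on_arc by blast
  qed
qed (auto simp: drawing_def)

lemma drawing_inner:
  assumes "W \<subseteq> V" "D \<subseteq> E" "e \<in> E" "p \<in> inner_pts e"
  shows "p \<in> drawing W D pos c \<longleftrightarrow> e \<in> D"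
proof
  assume "p \<in> drawing W D pos c"
  then consider "p \<in> pos ` W" | e' where "e' \<in> D" "p \<in> path_image (c e')"
    unfolding drawing_def by blast
  then show "e \<in> D"
  proof cases
    case 1 then show ?thesis using assms inner_notV by blast
  next
    case 2 then show ?thesis using assms inner_notE by blast
  qed
next
  assume "e \<in> D" then show "p \<in> drawing W D pos c"
    using assms(4) unfolding drawing_def inner_pts_def by blast
qed

lemma drawing_eq_imp:
  assumes "W \<subseteq> V" "D \<subseteq> E" "\<forall>e\<in>D. e \<subseteq> W"
    "W' \<subseteq> V" "D' \<subseteq> E" "\<forall>e\<in>D'. e \<subseteq> W'"
    "drawing W D pos c \<subseteq> drawing W' D' pos c"
  shows "W \<subseteq> W'" "D \<subseteq> D'"
proof -
  show "W \<subseteq> W'"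
  proof
    fix x assume "x \<in> W"
    then have "pos x \<in> drawing W D pos c" unfolding drawing_def by blast
    then show "x \<in> W'" using assms drawing_vert[of W' D' x] \<open>x \<in> W\<close> by blast
  qed
  show "D \<subseteq> D'"
  proof
    fix e assume "e \<in> D"
    then have "e \<in> E" using assms by blast
    have "c e (1/2) \<in> drawing W D pos c"
      using drawing_inner[OF assms(1,2) \<open>e\<in>E\<close> mid_inner[OF \<open>e\<in>E\<close>]] \<open>e\<in>D\<close> by blast
    then show "e \<in> D'"
      using drawing_inner[OF assms(4,5) \<open>e\<in>E\<close> mid_inner[OF \<open>e\<in>E\<close>]] assms(7) by blast
  qed
qed

end


lemma acc:
  fixes t :: "complex set"
  assumes ot: "open t" and p: "p \<in> frontier t" and r: "r > 0" and Y: "ball p r \<inter> frontier t \<subseteq> Y"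
  obtains q z where "q \<in> t" "z \<in> Y" "z \<in> frontier t" "closed_segment q z \<subseteq> insert z t"
proof -
  have "p \<in> closure t" using p by (simp add: frontier_def)
  then obtain q where q: "q \<in> t" "dist q p < r" using r closure_approachable by blast
  define \<sigma> where "\<sigma> = closed_segment q p"
  have qb: "q \<in> ball p r" using q by (simp add: dist_commute)
  have pb: "p \<in> ball p r" using r by simp
  have sb: "\<sigma> \<subseteq> ball p r" unfolding \<sigma>_def by (rule closed_segment_subset[OF qb pb convex_ball])
  define K where "K = \<sigma> \<inter> frontier t"
  have cK: "closed K" unfolding K_def \<sigma>_def by (intro closed_Int closed_segment frontier_closed)
  have pK: "p \<in> K" unfolding K_def \<sigma>_def using p by simp
  then have "K \<noteq> {}" by blast
  then obtain z where z: "z \<in> K" "\<And>y. y \<in> K \<Longrightarrow> dist q z \<le> dist q y"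
    using distance_attains_inf[OF cK] by metis
  have zY: "z \<in> Y" using z(1) sb Y unfolding K_def by blast
  have zf: "z \<in> frontier t" using z(1) unfolding K_def by blast
  have tf: "t \<inter> frontier t = {}" using ot by (simp add: frontier_def interior_open)
  have qz: "q \<noteq> z" using q(1) zf tf by blast
  have zs: "z \<in> \<sigma>" using z(1) unfolding K_def by blast
  have qzs: "closed_segment q z \<subseteq> \<sigma>" unfolding \<sigma>_def subset_closed_segment
    using zs \<sigma>_def by simp
  have "closed_segment q z \<subseteq> insert z t"
  proof
    fix y assume y: "y \<in> closed_segment q z"
    show "y \<in> insert z t"
    proof (cases "y = z")
      case True then show ?thesis by simp
    next
      case False
      have dy: "dist q y < dist q z"
      proof (cases "y = q")
        case True then show ?thesis using qz by simp
      next
        case False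
        then have "y \<in> open_segment q z" using y \<open>y \<noteq> z\<close> by (simp add: open_segment_def)
        then show ?thesis using dist_in_open_segment by (metis dist_commute)
      qed
      have sub: "closed_segment q y \<subseteq> closed_segment q z"
        unfolding subset_closed_segment using y by simp
      have nf: "closed_segment q y \<inter> frontier t = {}"
      proof (rule ccontr)
        assume "closed_segment q y \<inter> frontier t \<noteq> {}"
        then obtain y' where y': "y' \<in> closed_segment q y" "y' \<in> frontier t" by blast
        then have "y' \<in> K" unfolding K_def using sub qzs by blast
        then have "dist q z \<le> dist q y'" by (rule z(2))
        moreover have "dist q y' \<le> dist q y"
          using dist_in_closed_segment[OF y'(1)] by (simp add: dist_commute)
        ultimately show False using dy by simp
      qed
      have "closed_segment q y - t = {}"
      proof (rule ccontr)
        assume "closed_segment q y - t \<noteq> {}"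
        moreover have "closed_segment q y \<inter> t \<noteq> {}" using q(1) by auto
        ultimately have "closed_segment q y \<inter> frontier t \<noteq> {}"
          using connected_Int_frontier[OF connected_segment] by blast
        then show False using nf by simp
      qed
      then have "y \<in> t" by auto
      then show ?thesis by simp
    qed
  qed
  then show ?thesis using that q(1) zY zf by blast
qed

lemma subarc:
  fixes g :: "real \<Rightarrow> complex"
  assumes g: "arc g" and a: "a \<in> path_image g" and b: "b \<in> path_image g"
  obtains K where "compact K" "connected K" "a \<in> K" "b \<in> K" "K \<subseteq> path_image g"
     "pathstart g \<in> K \<Longrightarrow> pathstart g = a \<or> pathstart g = b"
     "pathfinish g \<in> K \<Longrightarrow> pathfinish g = a \<or> pathfinish g = b"
proof -
  obtain s where s: "s \<in> {0..1}" "a = g s" using a unfolding path_image_def by blast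
  obtain s' where s': "s' \<in> {0..1}" "b = g s'" using b unfolding path_image_def by blast
  define I where "I = closed_segment s s'"
  have I01: "I \<subseteq> {0..1}" unfolding I_def
    using closed_segment_subset[OF s(1) s'(1)] by (simp add: convex_real_interval)
  have inj: "inj_on g {0..1}" using g by (simp add: arc_def)
  have cont: "continuous_on I g"
    using g I01 unfolding arc_def path_def by (meson continuous_on_subset)
  define K where "K = g ` I"
  have "compact K" unfolding K_def I_def using cont I_def
    by (intro compact_continuous_image) (auto)
  moreover have "connected K" unfolding K_def using cont I_def
    by (intro connected_continuous_image) (auto)
  moreover have "a \<in> K" "b \<in> K" unfolding K_def I_def using s s' by auto
  moreover have "K \<subseteq> path_image g" unfolding K_def path_image_def using I01 by auto
  moreover have "pathstart g = a \<or> pathstart g = b" if ps: "pathstart g \<in> K"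
  proof -
    obtain r where r: "r \<in> I" "g 0 = g r" using ps unfolding K_def pathstart_def by auto
    have "r = 0" using inj_onD[OF inj r(2)] r(1) I01 by auto
    then have "0 \<in> I" using r by simp
    then have "s = 0 \<or> s' = 0" using s s' unfolding I_def closed_segment_eq_real_ivl
      by (auto split: if_splits)
    then show ?thesis using s s' unfolding pathstart_def by auto
  qed
  moreover have "pathfinish g = a \<or> pathfinish g = b" if pf: "pathfinish g \<in> K"
  proof -
    obtain r where r: "r \<in> I" "g 1 = g r" using pf unfolding K_def pathfinish_def by auto
    have "r = 1" using inj_onD[OF inj r(2)] r(1) I01 by auto
    then have "1 \<in> I" using r by simp
    then have "s = 1 \<or> s' = 1" using s s' unfolding I_def closed_segment_eq_real_ivl
      by (auto split: if_splits)
    then show ?thesis using s s' unfolding pathfinish_def by auto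
  qed
  ultimately show ?thesis using that by blast
qed

lemma tri_edges_3:
  assumes "x \<noteq> y" "y \<noteq> z" "x \<noteq> z"
  shows "tri_edges {x,y,z} = {{x,y},{x,z},{y,z}}"
proof
  show "tri_edges {x,y,z} \<subseteq> {{x,y},{x,z},{y,z}}"
  proof
    fix e assume "e \<in> tri_edges {x,y,z}"
    then have e: "e \<subseteq> {x,y,z}" "card e = 2" unfolding tri_edges_def by auto
    then obtain a b where ab: "e = {a,b}" "a \<noteq> b" by (meson card_2_iff)
    then show "e \<in> {{x,y},{x,z},{y,z}}" using e(1) by auto
  qed
  show "{{x,y},{x,z},{y,z}} \<subseteq> tri_edges {x,y,z}"
    unfolding tri_edges_def using assms by auto
qed

lemma card3le: "card {A,B,C} \<le> 3"
proof -
  have "card {C} \<le> 1" by simp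
  then have "card {B,C} \<le> 2" by (intro card_insert_le_m1) simp_all
  then show "card {A,B,C} \<le> 3" by (intro card_insert_le_m1) simp_all
qed

lemma tri_in_cycle:
  assumes cyc: "is_cycle W D" and TW: "T \<subseteq> W" and T3: "card T = 3" and TD: "tri_edges T \<subseteq> D"
  shows "card D \<le> 3"
proof -
  have fW: "finite W" and Dw: "\<forall>e\<in>D. e \<subseteq> W \<and> card e = 2"
    and deg: "\<forall>v\<in>W. card {e\<in>D. v \<in> e} = 2"
    and con: "connected_graph W D" using cyc unfolding is_cycle_def by auto
  have fD: "finite D"
  proof -
    have "D \<subseteq> Pow W" using Dw by auto
    then show ?thesis using fW by (simp add: finite_subset)
  qed
  obtain a b d where T: "T = {a,b,d}" "a \<noteq> b" "b \<noteq> d" "a \<noteq> d" using T3 by (meson card_3_iff)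
  have three: "\<exists>o1 o2. T = {x,o1,o2} \<and> x \<noteq> o1 \<and> x \<noteq> o2" if xT: "x \<in> T" for x
  proof -
    consider "x = a" | "x = b" | "x = d" using xT T by blast
    then show ?thesis
    proof cases
      case 1 then show ?thesis using T by (intro exI[of _ b] exI[of _ d]) simp
    next
      case 2 then show ?thesis using T by (intro exI[of _ a] exI[of _ d]) (simp add: insert_commute)
    next
      case 3 then show ?thesis using T by (intro exI[of _ a] exI[of _ b]) (simp add: insert_commute)
    qed
  qed
  have stepL: "y \<in> T" if x: "x \<in> T" and xy: "{x,y} \<in> D" for x y
  proof -
    obtain o1 o2 where o: "T = {x,o1,o2}" "x \<noteq> o1" "x \<noteq> o2" using three[OF x] by blast
    have o12: "o1 \<noteq> o2"
    proof
      assume "o1 = o2"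
      then have "T = {x,o1}" using o by simp
      moreover have "card {x,o1} \<le> 2" by (intro card_insert_le_m1) simp_all
      ultimately have "card T \<le> 2" by simp
      then show False using T3 by simp
    qed
    have e1: "{x,o1} \<in> D" using TD o unfolding tri_edges_def by auto
    have e2: "{x,o2} \<in> D" using TD o o12 unfolding tri_edges_def by auto
    have xW: "x \<in> W" using x TW by auto
    have sub: "{{x,o1},{x,o2}} \<subseteq> {e\<in>D. x \<in> e}" using e1 e2 by auto
    have "card {{x,o1},{x,o2}} = 2" using o12 by (auto simp: doubleton_eq_iff)
    moreover have "card {e\<in>D. x \<in> e} = 2" using deg xW by auto
    moreover have "finite {e\<in>D. x \<in> e}" using fD by auto
    ultimately have eq: "{{x,o1},{x,o2}} = {e\<in>D. x \<in> e}" using card_subset_eq sub by metis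
    have "{x,y} \<in> {e\<in>D. x \<in> e}" using xy by simp
    then have "{x,y} \<in> {{x,o1},{x,o2}}" by (simp only: eq)
    then have "{x,y} = {x,o1} \<or> {x,y} = {x,o2}" by simp
    moreover have "y \<in> {x,y}" by simp
    moreover have "{x,o1} \<subseteq> T" "{x,o2} \<subseteq> T" using o by auto
    ultimately show "y \<in> T" by blast
  qed
  have aT: "a \<in> T" using T by simp
  have "y \<in> T" if "y \<in> W" for y
  proof -
    have cg: "\<forall>x\<in>W. \<forall>y\<in>W. (\<lambda>a b. {a, b} \<in> D \<and> a \<in> W \<and> b \<in> W)\<^sup>*\<^sup>* x y"
      using con unfolding connected_graph_def .
    have aW: "a \<in> W" using aT TW by auto
    have "(\<lambda>a b. {a, b} \<in> D \<and> a \<in> W \<and> b \<in> W)\<^sup>*\<^sup>* a y"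
      using cg aW that by blast
    then show ?thesis
    proof (induction rule: rtranclp_induct)
      case base then show ?case by (rule aT)
    next
      case (step y z)
      then have "{y,z} \<in> D" "y \<in> T" by simp_all
      then show ?case using stepL by simp
    qed
  qed
  then have "W \<subseteq> T" by blast
  then have "D \<subseteq> tri_edges T" using Dw unfolding tri_edges_def by auto
  then have "card D \<le> card (tri_edges T)"
    by (simp add: card_mono T tri_edges_3)
  also have "\<dots> \<le> 3" using T by (simp add: tri_edges_3 card3le)
  finally show ?thesis .
qed


context pg
begin

lemma sub_int:
  assumes VB: "VB \<subseteq> V" and EB: "EB \<subseteq> E" and EV: "\<forall>e\<in>EB. e \<subseteq> VB"
  shows "drawing (VB-{u}) {x\<in>EB. u\<notin>x} pos c \<inter> drawing (VB-{v}) {x\<in>EB. v\<notin>x} pos c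
       = drawing (VB-{u,v}) {x\<in>EB. u\<notin>x \<and> v\<notin>x} pos c"
proof
  show "drawing (VB-{u,v}) {x\<in>EB. u\<notin>x \<and> v\<notin>x} pos c \<subseteq>
    drawing (VB-{u}) {x\<in>EB. u\<notin>x} pos c \<inter> drawing (VB-{v}) {x\<in>EB. v\<notin>x} pos c"
    unfolding drawing_def by auto
next
  show "drawing (VB-{u}) {x\<in>EB. u\<notin>x} pos c \<inter> drawing (VB-{v}) {x\<in>EB. v\<notin>x} pos c
       \<subseteq> drawing (VB-{u,v}) {x\<in>EB. u\<notin>x \<and> v\<notin>x} pos c"
  proof
    fix p assume p: "p \<in> drawing (VB-{u}) {x\<in>EB. u\<notin>x} pos c \<inter> drawing (VB-{v}) {x\<in>EB. v\<notin>x} pos c"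
    have vert: "p \<in> drawing (VB-{u,v}) {x\<in>EB. u\<notin>x \<and> v\<notin>x} pos c"
      if "y \<in> VB" "y \<noteq> u" "y \<noteq> v" "p = pos y" for y
      using that unfolding drawing_def by blast
    have arcin: "p \<in> drawing (VB-{u,v}) {x\<in>EB. u\<notin>x \<and> v\<notin>x} pos c"
      if "e \<in> EB" "u \<notin> e" "v \<notin> e" "p \<in> path_image (c e)" for e
      using that unfolding drawing_def by blast
    from p consider
      (a) y where "y \<in> VB" "y \<noteq> u" "p = pos y"
    | (b) e where "e \<in> EB" "u \<notin> e" "p \<in> path_image (c e)"
      unfolding drawing_def by blast
    then show "p \<in> drawing (VB-{u,v}) {x\<in>EB. u\<notin>x \<and> v\<notin>x} pos c"
    proof cases
      case a
      from p consider
        (a') y' where "y' \<in> VB" "y' \<noteq> v" "p = pos y'"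
      | (b') e' where "e' \<in> EB" "v \<notin> e'" "p \<in> path_image (c e')"
        unfolding drawing_def by blast
      then show ?thesis
      proof cases
        case a'
        then have "y = y'" using a pos_eq VB by blast
        then show ?thesis using a a' vert by blast
      next
        case b'
        have "y \<in> e'" using vert_on_arc[of e' y] b' a VB EB by blast
        then show ?thesis using a b' vert by blast
      qed
    next
      case b
      from p consider
        (a') y' where "y' \<in> VB" "y' \<noteq> v" "p = pos y'"
      | (b') e' where "e' \<in> EB" "v \<notin> e'" "p \<in> path_image (c e')"
        unfolding drawing_def by blast
      then show ?thesis
      proof cases
        case a'
        have "y' \<in> e" using vert_on_arc[of e y'] b a' VB EB by blast
        then show ?thesis using b a' vert by blast
      next
        case b'
        show ?thesis
        proof (cases "e = e'")
          case True then show ?thesis using b b' arcin by blast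
        next
          case False
          have "p \<in> path_image (c e) \<inter> path_image (c e')" using b b' by simp
          then have "p \<in> pos ` (e \<inter> e')" using meetE[of e e'] False b b' EB by blast
          then obtain y where "y \<in> e" "y \<in> e'" "p = pos y" by blast
          moreover have "y \<in> VB" using \<open>y \<in> e\<close> b EV by blast
          ultimately show ?thesis using b b' vert by blast
        qed
      qed
    qed
  qed
qed

lemma sub_cover:
  assumes VB: "VB \<subseteq> V" and EB: "EB \<subseteq> E" and uv: "u \<noteq> v"
  shows "drawing VB EB pos c \<subseteq> drawing (VB-{u}) {x\<in>EB. u\<notin>x} pos c \<union> drawing (VB-{v}) {x\<in>EB. v\<notin>x} pos c
     \<union> (\<Union>e\<in>{e\<in>EB. e = {u,v}}. path_image (c e))"
proof
  fix p assume "p \<in> drawing VB EB pos c"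
  then consider (a) y where "y \<in> VB" "p = pos y" | (b) e where "e \<in> EB" "p \<in> path_image (c e)"
    unfolding drawing_def by blast
  then show "p \<in> drawing (VB-{u}) {x\<in>EB. u\<notin>x} pos c \<union> drawing (VB-{v}) {x\<in>EB. v\<notin>x} pos c
     \<union> (\<Union>e\<in>{e\<in>EB. e = {u,v}}. path_image (c e))"
  proof cases
    case a
    then show ?thesis using uv unfolding drawing_def by (cases "y = u") auto
  next
    case b
    show ?thesis
    proof (cases "u \<in> e \<and> v \<in> e")
      case True
      have "card e = 2" using b EB edge2 by blast
      then have fe: "finite e" by (intro card_ge_0_finite) simp
      have "card {u,v} = 2" using uv by simp
      then have "{u,v} = e" using card_subset_eq[OF fe, of "{u,v}"] True \<open>card e = 2\<close> by simp
      then show ?thesis using b by blast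
    next
      case False
      then show ?thesis using b unfolding drawing_def by blast
    qed
  qed
qed

lemma notin_Du:
  assumes "u \<in> V" "VB \<subseteq> V" "EB \<subseteq> E"
  shows "pos u \<notin> drawing (VB-{u}) {x\<in>EB. u\<notin>x} pos c"
proof
  assume "pos u \<in> drawing (VB-{u}) {x\<in>EB. u\<notin>x} pos c"
  then consider (a) y where "y \<in> VB" "y \<noteq> u" "pos u = pos y"
      | (b) e where "e \<in> EB" "u \<notin> e" "pos u \<in> path_image (c e)"
    unfolding drawing_def by blast
  then show False
  proof cases
    case a then show False using pos_eq assms by blast
  next
    case b then show False using vert_on_arc assms by blast
  qed
qed

lemma arc_meet_Du:
  assumes VB: "VB \<subseteq> V" and EB: "EB \<subseteq> E" and uv: "u \<noteq> v" "{u,v} \<in> EB"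
    and p: "p \<in> path_image (c {u,v})" "p \<in> drawing (VB-{u}) {x\<in>EB. u\<notin>x} pos c"
  shows "p = pos v"
proof -
  have uvE: "{u,v} \<in> E" using uv EB by blast
  from p(2) consider (a) y where "y \<in> VB" "y \<noteq> u" "p = pos y"
      | (b) e where "e \<in> EB" "u \<notin> e" "p \<in> path_image (c e)"
    unfolding drawing_def by blast
  then show ?thesis
  proof cases
    case a
    then have "y \<in> {u,v}" using vert_on_arc[OF uvE, of y] p(1) VB by blast
    then show ?thesis using a by blast
  next
    case b
    then have "e \<noteq> {u,v}" by blast
    then have "p \<in> pos ` (e \<inter> {u,v})" using meetE[of e "{u,v}"] b p(1) EB uvE by blast
    then show ?thesis using b by blast
  qed
qed


lemma drawing_mono: "W \<subseteq> W' \<Longrightarrow> D \<subseteq> D' \<Longrightarrow> drawing W D pos c \<subseteq> drawing W' D' pos c"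
  unfolding drawing_def by blast

lemma faces_open: "finite W \<Longrightarrow> finite D \<Longrightarrow> D \<subseteq> E \<Longrightarrow> f \<in> faces W D pos c \<Longrightarrow> open f"
  unfolding faces_def
  by (meson compact_drawing compact_imp_closed open_Compl open_components)

lemma faces_sub: "f \<in> faces W D pos c \<Longrightarrow> f \<subseteq> - drawing W D pos c"
  unfolding faces_def by (rule in_components_subset)

lemma tri_face_disj:
  assumes ftT: "facial_triangle V E pos c T" and t: "t \<in> faces V E pos c"
    and tfr: "frontier t = drawing T (tri_edges T) pos c"
    and VB: "VB \<subseteq> V" and EB: "EB \<subseteq> E" and fVB: "finite VB"
    and TVB: "T \<subseteq> VB" and TEB: "tri_edges T \<subseteq> EB"
    and f: "f \<in> faces VB EB pos c" and ffr: "frontier f = drawing W D pos c"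
    and cyc: "is_cycle W D" and WV: "W \<subseteq> VB" and DE: "D \<subseteq> EB" and D4: "card D \<ge> 4"
  shows "t \<inter> f = {}"
proof (rule ccontr)
  assume ne: "t \<inter> f \<noteq> {}"
  have fEB: "finite EB" using EB finE finite_subset by blast
  have ot: "open t" using faces_open[OF finV finE subset_refl t] .
  have of: "open f" using faces_open[OF fVB fEB EB f] .
  have "drawing VB EB pos c \<subseteq> drawing V E pos c" using drawing_mono[OF VB EB] .
  then have tsub: "t \<subseteq> - drawing VB EB pos c" using faces_sub[OF t] by blast
  have ct: "connected t" using t unfolding faces_def by (rule in_components_connected)
  have "t \<subseteq> f" using components_maximal[of f "- drawing VB EB pos c" t] f ct tsub ne
    unfolding faces_def by blast
  then have "closure t \<subseteq> closure f" by (rule closure_mono)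
  moreover have "frontier t \<subseteq> closure t" by (simp add: frontier_def)
  moreover have "frontier t \<subseteq> drawing VB EB pos c" unfolding tfr using drawing_mono[OF TVB TEB] .
  moreover have "f \<subseteq> - drawing VB EB pos c" using faces_sub[OF f] .
  ultimately have "frontier t \<subseteq> closure f - f" by blast
  also have "closure f - f = frontier f" using of by (simp add: frontier_def interior_open)
  finally have sub: "drawing T (tri_edges T) pos c \<subseteq> drawing W D pos c" using tfr ffr by simp
  have TV: "T \<subseteq> V" and tE: "tri_edges T \<subseteq> E" and T3: "card T = 3"
    using ftT unfolding facial_triangle_def facial_cycle_def by auto
  have te: "\<forall>e\<in>tri_edges T. e \<subseteq> T" unfolding tri_edges_def by blast
  have cw: "\<forall>e\<in>D. e \<subseteq> W" using cyc unfolding is_cycle_def by blast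
  have "T \<subseteq> W" "tri_edges T \<subseteq> D"
    using drawing_eq_imp[OF TV tE te _ _ cw sub] WV VB DE EB by blast+
  then have "card D \<le> 3" using tri_in_cycle[OF cyc _ T3] by blast
  then show False using D4 by simp
qed


lemma link_tri:
  assumes ftT: "facial_triangle V E pos c T" and T: "T = {u,v,w}" "u \<noteq> v" "v \<noteq> w" "u \<noteq> w"
    and t: "t \<in> faces V E pos c" and tfr: "frontier t = drawing T (tri_edges T) pos c"
  obtains K where "compact K" "connected K" "pos w \<in> K" "c {u,v} (1/2) \<in> K"
    "pos u \<notin> K" "pos v \<notin> K" "K \<subseteq> path_image (c {v,w}) \<union> path_image (c {u,v}) \<union> t"
proof -
  have TV: "T \<subseteq> V" and tE: "tri_edges T \<subseteq> E"
    using ftT unfolding facial_triangle_def facial_cycle_def by auto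
  have tr: "tri_edges T = {{u,v},{u,w},{v,w}}" using T tri_edges_3 by simp
  have Euv: "{u,v} \<in> E" and Euw: "{u,w} \<in> E" and Evw: "{v,w} \<in> E" using tE tr by auto
  have uV: "u \<in> V" and vV: "v \<in> V" and wV: "w \<in> V" using TV T by auto
  have Del: "frontier t = pos ` T \<union> path_image (c {u,v}) \<union> path_image (c {u,w}) \<union> path_image (c {v,w})"
    unfolding tfr drawing_def tr by auto
  have ot: "open t" using faces_open[OF finV finE subset_refl t] .
  have tdr: "t \<subseteq> - drawing V E pos c" using faces_sub[OF t] .
  have posVt: "pos x \<notin> t" if "x \<in> V" for x using that tdr unfolding drawing_def by blast
  have ne_uv_vw: "{u,v} \<noteq> {v,w}" "{u,w} \<noteq> {v,w}" "{u,v} \<noteq> {u,w}"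
    using T by (auto simp: doubleton_eq_iff)
  define p1 where "p1 = c {v,w} (1/2)"
  have p1i: "p1 \<in> inner_pts {v,w}" unfolding p1_def by (rule mid_inner[OF Evw])
  define Z1 where "Z1 = pos ` T \<union> path_image (c {u,v}) \<union> path_image (c {u,w})"
  have cZ1: "closed Z1" unfolding Z1_def using T
    by (intro closed_Un compact_imp_closed finite_imp_compact compact_arc Euv Euw) auto
  have p1Z: "p1 \<notin> Z1"
  proof -
    have "p1 \<notin> pos ` T" using inner_notV[OF Evw p1i] TV by blast
    moreover have "p1 \<notin> path_image (c {u,v})" using inner_notE[OF Evw Euv _ p1i] ne_uv_vw by metis
    moreover have "p1 \<notin> path_image (c {u,w})" using inner_notE[OF Evw Euw _ p1i] ne_uv_vw by metis
    ultimately show ?thesis unfolding Z1_def by blast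
  qed
  obtain r1 where r1: "r1 > 0" "ball p1 r1 \<subseteq> - Z1"
    using open_contains_ball[of "- Z1"] cZ1 p1Z by (meson ComplI open_Compl)
  have p1f: "p1 \<in> frontier t" unfolding Del using p1i unfolding inner_pts_def by blast
  have Y1: "ball p1 r1 \<inter> frontier t \<subseteq> inner_pts {v,w}"
  proof
    fix x assume x: "x \<in> ball p1 r1 \<inter> frontier t"
    then have "x \<notin> Z1" using r1 by blast
    then have "x \<in> path_image (c {v,w})" "x \<notin> pos ` T" using x unfolding Del Z1_def by blast+
    then show "x \<in> inner_pts {v,w}" unfolding inner_pts_def using T by blast
  qed
  obtain q1 z1 where q1: "q1 \<in> t" "z1 \<in> inner_pts {v,w}" "closed_segment q1 z1 \<subseteq> insert z1 t"
    using acc[OF ot p1f r1(1) Y1] by blast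
  define p2 where "p2 = c {u,v} (1/2)"
  have p2i: "p2 \<in> inner_pts {u,v}" unfolding p2_def by (rule mid_inner[OF Euv])
  define Z2 where "Z2 = pos ` T \<union> path_image (c {u,w}) \<union> path_image (c {v,w})"
  have cZ2: "closed Z2" unfolding Z2_def using T
    by (intro closed_Un compact_imp_closed finite_imp_compact compact_arc Evw Euw) auto
  have p2Z: "p2 \<notin> Z2"
  proof -
    have "p2 \<notin> pos ` T" using inner_notV[OF Euv p2i] TV by blast
    moreover have "p2 \<notin> path_image (c {v,w})" using inner_notE[OF Euv Evw _ p2i] ne_uv_vw by metis
    moreover have "p2 \<notin> path_image (c {u,w})" using inner_notE[OF Euv Euw _ p2i] ne_uv_vw by metis
    ultimately show ?thesis unfolding Z2_def by blast
  qed
  obtain r2 where r2: "r2 > 0" "ball p2 r2 \<subseteq> - Z2"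
    using open_contains_ball[of "- Z2"] cZ2 p2Z by (meson ComplI open_Compl)
  have p2f: "p2 \<in> frontier t" unfolding Del using p2i unfolding inner_pts_def by blast
  have Y2: "ball p2 r2 \<inter> frontier t \<subseteq> inner_pts {u,v}"
  proof
    fix x assume x: "x \<in> ball p2 r2 \<inter> frontier t"
    then have "x \<notin> Z2" using r2 by blast
    then have "x \<in> path_image (c {u,v})" "x \<notin> pos ` T" using x unfolding Del Z2_def by blast+
    then show "x \<in> inner_pts {u,v}" unfolding inner_pts_def using T by blast
  qed
  obtain q2 z2 where q2: "q2 \<in> t" "z2 \<in> inner_pts {u,v}" "closed_segment q2 z2 \<subseteq> insert z2 t"
    using acc[OF ot p2f r2(1) Y2] by blast
  have "connected t" using t unfolding faces_def by (rule in_components_connected)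
  then have "path_connected t" using ot connected_open_path_connected by blast
  then obtain g where g: "path g" "path_image g \<subseteq> t" "pathstart g = q1" "pathfinish g = q2"
    using q1(1) q2(1) unfolding path_connected_def by blast
  have z1a: "z1 \<in> path_image (c {v,w})" using q1(2) unfolding inner_pts_def by blast
  have wa: "pos w \<in> path_image (c {v,w})" using end_in_arc[OF Evw] by simp
  obtain K1 where K1: "compact K1" "connected K1" "pos w \<in> K1" "z1 \<in> K1" "K1 \<subseteq> path_image (c {v,w})"
     "pathstart (c {v,w}) \<in> K1 \<Longrightarrow> pathstart (c {v,w}) = pos w \<or> pathstart (c {v,w}) = z1"
     "pathfinish (c {v,w}) \<in> K1 \<Longrightarrow> pathfinish (c {v,w}) = pos w \<or> pathfinish (c {v,w}) = z1"
    using subarc[OF arcc[OF Evw] wa z1a] by blast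
  have z2a: "z2 \<in> path_image (c {u,v})" using q2(2) unfolding inner_pts_def by blast
  have ma: "c {u,v} (1/2) \<in> path_image (c {u,v})" using mid_inner[OF Euv] unfolding inner_pts_def by blast
  obtain K2 where K2: "compact K2" "connected K2" "z2 \<in> K2" "c {u,v} (1/2) \<in> K2" "K2 \<subseteq> path_image (c {u,v})"
     "pathstart (c {u,v}) \<in> K2 \<Longrightarrow> pathstart (c {u,v}) = z2 \<or> pathstart (c {u,v}) = c {u,v} (1/2)"
     "pathfinish (c {u,v}) \<in> K2 \<Longrightarrow> pathfinish (c {u,v}) = z2 \<or> pathfinish (c {u,v}) = c {u,v} (1/2)"
    using subarc[OF arcc[OF Euv] z2a ma] by blast
  define K where "K = K1 \<union> closed_segment q1 z1 \<union> path_image g \<union> closed_segment q2 z2 \<union> K2"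
  have "compact K" unfolding K_def
    by (intro compact_Un K1 K2 compact_segment compact_path_image g)
  moreover have "connected K"
  proof -
    have i1: "z1 \<in> K1 \<inter> closed_segment q1 z1" using K1 by simp
    have c1: "connected (K1 \<union> closed_segment q1 z1)"
      using connected_Un[OF K1(2) connected_segment] i1 by blast
    have i2: "q1 \<in> (K1 \<union> closed_segment q1 z1) \<inter> path_image g" using g(3) pathstart_in_path_image[of g] by simp
    have c2: "connected (K1 \<union> closed_segment q1 z1 \<union> path_image g)"
      using connected_Un[OF c1 connected_path_image[OF g(1)]] i2 by blast
    have i3: "q2 \<in> (K1 \<union> closed_segment q1 z1 \<union> path_image g) \<inter> closed_segment q2 z2"
      using g(4) pathfinish_in_path_image[of g] by simp
    have c3: "connected (K1 \<union> closed_segment q1 z1 \<union> path_image g \<union> closed_segment q2 z2)"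
      using connected_Un[OF c2 connected_segment] i3 by blast
    have i4: "z2 \<in> (K1 \<union> closed_segment q1 z1 \<union> path_image g \<union> closed_segment q2 z2) \<inter> K2"
      using K2 by simp
    show ?thesis unfolding K_def using connected_Un[OF c3 K2(2)] i4 by blast
  qed
  moreover have "pos w \<in> K" "c {u,v} (1/2) \<in> K" unfolding K_def using K1 K2 by auto
  moreover have "K \<subseteq> path_image (c {v,w}) \<union> path_image (c {u,v}) \<union> t"
    unfolding K_def using K1 K2 g q1 q2 z1a z2a by blast
  moreover have "pos u \<notin> K"
  proof -
    have "pos u \<notin> path_image (c {v,w})" using vert_on_arc[OF Evw uV] T by simp
    then have "pos u \<notin> K1" using K1 by blast
    moreover have "pos u \<notin> K2"
    proof
      assume "pos u \<in> K2"
      have "pos u \<in> {pathstart (c {u,v}), pathfinish (c {u,v})}" using ends[OF Euv] by simp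
      then have "pos u = z2 \<or> pos u = c {u,v} (1/2)" using K2(6,7) \<open>pos u \<in> K2\<close> by auto
      moreover have "pos u \<notin> inner_pts {u,v}" unfolding inner_pts_def by simp
      ultimately show False using q2(2) mid_inner[OF Euv] by auto
    qed
    moreover have "pos u \<notin> t" using posVt uV by blast
    moreover have "z1 \<noteq> pos u" "z2 \<noteq> pos u" using inner_notV[OF Evw q1(2)] inner_notV[OF Euv q2(2)] uV by auto
    ultimately show ?thesis unfolding K_def using q1(3) q2(3) g(2) by blast
  qed
  moreover have "pos v \<notin> K"
  proof -
    have "pos v \<notin> K1"
    proof
      assume "pos v \<in> K1"
      have "pos v \<in> {pathstart (c {v,w}), pathfinish (c {v,w})}" using ends[OF Evw] by simp
      then have "pos v = pos w \<or> pos v = z1" using K1(6,7) \<open>pos v \<in> K1\<close> by auto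
      moreover have "pos v \<noteq> pos w" using pos_eq[OF vV wV] T by simp
      moreover have "pos v \<notin> inner_pts {v,w}" unfolding inner_pts_def by simp
      ultimately show False using q1(2) by auto
    qed
    moreover have "pos v \<notin> K2"
    proof
      assume "pos v \<in> K2"
      have "pos v \<in> {pathstart (c {u,v}), pathfinish (c {u,v})}" using ends[OF Euv] by simp
      then have "pos v = z2 \<or> pos v = c {u,v} (1/2)" using K2(6,7) \<open>pos v \<in> K2\<close> by auto
      moreover have "pos v \<notin> inner_pts {u,v}" unfolding inner_pts_def by simp
      ultimately show False using q2(2) mid_inner[OF Euv] by auto
    qed
    moreover have "pos v \<notin> t" using posVt vV by blast
    moreover have "z1 \<noteq> pos v" "z2 \<noteq> pos v" using inner_notV[OF Evw q1(2)] inner_notV[OF Euv q2(2)] vV by auto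
    ultimately show ?thesis unfolding K_def using q1(3) q2(3) g(2) by blast
  qed
  ultimately show ?thesis using that by blast
qed

end

locale blk = pg V E pos c for V :: "'v set" and E pos c +
  fixes e0 :: "'v set" and Ts :: "'v set set"
  assumes Ts_def: "Ts = {T'. \<exists>T. facial_triangle V E pos c T \<and> e0 \<in> tri_edges T \<and> tri_equiv V E pos c T T'}"
begin

abbreviation ft where "ft \<equiv> facial_triangle V E pos c"
abbreviation RR where "RR \<equiv> (\<lambda>A B. ft A \<and> ft B \<and> tri_edges A \<inter> tri_edges B \<noteq> {})"

lemma rtr_ft: "RR\<^sup>*\<^sup>* A B \<Longrightarrow> ft A \<Longrightarrow> ft B"
  by (induction rule: rtranclp_induct) auto

lemma Ts_ft: "T \<in> Ts \<Longrightarrow> ft T"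
  unfolding Ts_def tri_equiv_def using rtr_ft by blast

lemma ft_props: "ft T \<Longrightarrow> T \<subseteq> V \<and> tri_edges T \<subseteq> E \<and> card T = 3"
  unfolding facial_triangle_def facial_cycle_def by auto

lemma good_all:
  assumes arcs: "\<And>a b. {a,b} \<in> \<Union>(tri_edges ` Ts) \<Longrightarrow> a \<notin> {u,v} \<Longrightarrow> b \<notin> {u,v} \<Longrightarrow> pos a \<in> C \<Longrightarrow> pos b \<in> C"
    and uvT: "\<And>T y. T \<in> Ts \<Longrightarrow> u \<in> T \<Longrightarrow> v \<in> T \<Longrightarrow> y \<in> T - {u,v} \<Longrightarrow> pos y \<in> C"
    and base: "Tb \<in> Ts" "\<And>y. y \<in> Tb - {u,v} \<Longrightarrow> pos y \<in> C"
    and T: "T \<in> Ts" and y: "y \<in> T - {u,v}"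
  shows "pos y \<in> C"
proof -
  define Good where "Good X \<longleftrightarrow> (\<forall>y\<in>X-{u,v}. pos y \<in> C)" for X
  have stepG: "Good B" if AB: "A \<in> Ts" "B \<in> Ts" "RR A B" "Good A" for A B
  proof -
    obtain ed where ed: "ed \<in> tri_edges A" "ed \<in> tri_edges B" using AB(3) by blast
    then have "card ed = 2" unfolding tri_edges_def by blast
    then obtain a b where ab: "ed = {a,b}" "a \<noteq> b" by (meson card_2_iff)
    have abA: "a \<in> A" "b \<in> A" using ed(1) ab unfolding tri_edges_def by auto
    have abB: "a \<in> B" "b \<in> B" using ed(2) ab unfolding tri_edges_def by auto
    show "Good B"
    proof (cases "u \<in> B \<and> v \<in> B")
      case True then show ?thesis unfolding Good_def using uvT AB(2) by blast
    next
      case False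
      then have "\<exists>x\<in>{a,b}. x \<notin> {u,v}" using abB ab(2) by auto
      then obtain x where x: "x \<in> {a,b}" "x \<notin> {u,v}" by blast
      have xA: "x \<in> A" "x \<in> B" using x abA abB by auto
      have px: "pos x \<in> C" using AB(4) xA x unfolding Good_def by blast
      show ?thesis unfolding Good_def
      proof
        fix y assume y: "y \<in> B - {u,v}"
        show "pos y \<in> C"
        proof (cases "y = x")
          case True then show ?thesis using px by simp
        next
          case False
          have "{x,y} \<in> tri_edges B" unfolding tri_edges_def using False xA y by auto
          then have "{x,y} \<in> \<Union>(tri_edges ` Ts)" using AB(2) by blast
          then show ?thesis using arcs[of x y] x y px by blast
        qed
      qed
    qed
  qed
  have chain: "RR\<^sup>*\<^sup>* T0 X \<Longrightarrow> ft T0 \<Longrightarrow> e0 \<in> tri_edges T0 \<Longrightarrow> X \<in> Ts \<and> (Good T0 \<longleftrightarrow> Good X)" for T0 X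
  proof (induction rule: rtranclp_induct)
    case base
    then show ?case unfolding Ts_def tri_equiv_def by blast
  next
    case (step X Z)
    then have XT: "X \<in> Ts" and eq: "Good T0 \<longleftrightarrow> Good X" by auto
    have "RR\<^sup>*\<^sup>* T0 Z" by (rule rtranclp.rtrancl_into_rtrancl[OF step.hyps(1) step.hyps(2)])
    then have ZT: "Z \<in> Ts" unfolding Ts_def tri_equiv_def using step.prems by blast
    have "RR Z X" using step.hyps(2) by blast
    then have "Good X \<longleftrightarrow> Good Z" using stepG[OF XT ZT] stepG[OF ZT XT] step.hyps(2) by blast
    then show ?case using ZT eq by blast
  qed
  obtain Tb0 where Tb0: "ft Tb0" "e0 \<in> tri_edges Tb0" "RR\<^sup>*\<^sup>* Tb0 Tb"
    using base(1) unfolding Ts_def tri_equiv_def by blast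
  obtain T0 where T0: "ft T0" "e0 \<in> tri_edges T0" "RR\<^sup>*\<^sup>* T0 T"
    using T unfolding Ts_def tri_equiv_def by blast
  have "Good Tb" unfolding Good_def using base(2) by blast
  then have G1: "Good Tb0" using chain[OF Tb0(3) Tb0(1,2)] by blast
  have T0T: "T0 \<in> Ts" and Tb0T: "Tb0 \<in> Ts" using chain[OF _ T0(1,2)] chain[OF _ Tb0(1,2)] by blast+
  have "RR Tb0 T0" using Tb0 T0 by blast
  then have "Good T0" using stepG[OF Tb0T T0T] G1 by blast
  then have "Good T" using chain[OF T0(3) T0(1,2)] by blast
  then show ?thesis using y unfolding Good_def by blast
qed


end


context blk
begin

lemma TsV: assumes "T \<in> Ts" shows "T \<subseteq> V" using ft_props[OF Ts_ft[OF assms]] by (elim conjE)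
lemma TsE: assumes "T \<in> Ts" shows "tri_edges T \<subseteq> E" using ft_props[OF Ts_ft[OF assms]] by (elim conjE)
lemma VB_sub: "\<Union>Ts \<subseteq> V"
proof
  fix x assume "x \<in> \<Union>Ts"
  then obtain T where "T \<in> Ts" "x \<in> T" by (rule UnionE)
  show "x \<in> V" using TsV[OF \<open>T \<in> Ts\<close>] \<open>x \<in> T\<close> by (rule subsetD)
qed
lemma EB_sub: "\<Union>(tri_edges ` Ts) \<subseteq> E"
proof
  fix x assume "x \<in> \<Union>(tri_edges ` Ts)"
  then obtain T where "T \<in> Ts" "x \<in> tri_edges T" by auto
  show "x \<in> E" using TsE[OF \<open>T \<in> Ts\<close>] \<open>x \<in> tri_edges T\<close> by (rule subsetD)
qed
lemma EB_in: "\<forall>e\<in>\<Union>(tri_edges ` Ts). e \<subseteq> \<Union>Ts" unfolding tri_edges_def by blast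
lemma fin_VB: "finite (\<Union>Ts)" by (rule finite_subset[OF VB_sub finV])
lemma fin_EB: "finite (\<Union>(tri_edges ` Ts))" by (rule finite_subset[OF EB_sub finE])
lemma fin_Ts: "finite Ts"
proof -
  have "Ts \<subseteq> Pow V" using TsV by blast
  then show ?thesis using finV by (simp add: finite_subset)
qed

lemma X_conn:
  fixes P :: "complex set" and u v :: 'v and \<beta> :: complex
  defines "X \<equiv> drawing (\<Union>Ts - {u,v}) {x\<in>\<Union>(tri_edges ` Ts). u\<notin>x \<and> v\<notin>x} pos c \<union> P"
  assumes P: "P \<subseteq> connected_component_set X \<beta>"
    and uvT: "\<And>T y. T \<in> Ts \<Longrightarrow> u \<in> T \<Longrightarrow> v \<in> T \<Longrightarrow> y \<in> T - {u,v} \<Longrightarrow> pos y \<in> connected_component_set X \<beta>"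
    and base: "Tb \<in> Ts" "\<And>y. y \<in> Tb - {u,v} \<Longrightarrow> pos y \<in> connected_component_set X \<beta>"
  shows "connected X"
proof -
  define C where "C = connected_component_set X \<beta>"
  have arcC: "path_image (c e') \<subseteq> C" if e': "e' \<in> \<Union>(tri_edges ` Ts)" "u \<notin> e'" "v \<notin> e'" "a \<in> e'" "pos a \<in> C" for e' a
  proof -
    have eE: "e' \<in> E" using e' EB_sub by blast
    have AX: "path_image (c e') \<subseteq> X" unfolding X_def drawing_def using e' by blast
    have "pos a \<in> path_image (c e')" using end_in_arc[OF eE e'(4)] .
    then have "path_image (c e') \<subseteq> connected_component_set X (pos a)"
      using connected_component_maximal[OF _ connected_arc[OF eE] AX] by blast
    also have "\<dots> = C" unfolding C_def using connected_component_eq e'(5) unfolding C_def by blast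
    finally show ?thesis .
  qed
  have arcs: "pos b \<in> C" if ab: "{a,b} \<in> \<Union>(tri_edges ` Ts)" "a \<notin> {u,v}" "b \<notin> {u,v}" "pos a \<in> C" for a b
  proof -
    have "{a,b} \<in> E" using ab EB_sub by blast
    have "pos b \<in> path_image (c {a,b})" using end_in_arc[OF \<open>{a,b} \<in> E\<close>] by simp
    have nu: "u \<notin> {a,b}" "v \<notin> {a,b}" using ab(2,3) by auto
    have "path_image (c {a,b}) \<subseteq> C" by (rule arcC[OF ab(1) nu(1) nu(2) _ ab(4)]) simp
    then show ?thesis using \<open>pos b \<in> path_image (c {a,b})\<close> by blast
  qed
  have allv: "pos y \<in> C" if Ty: "T \<in> Ts" "y \<in> T - {u,v}" for T y
  proof (rule good_all[where C = C and Tb = Tb and u = u and v = v])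
    show "\<And>a b. {a, b} \<in> \<Union> (tri_edges ` Ts) \<Longrightarrow> a \<notin> {u, v} \<Longrightarrow> b \<notin> {u, v} \<Longrightarrow> pos a \<in> C \<Longrightarrow> pos b \<in> C"
      by (rule arcs)
    show "\<And>T y. T \<in> Ts \<Longrightarrow> u \<in> T \<Longrightarrow> v \<in> T \<Longrightarrow> y \<in> T - {u, v} \<Longrightarrow> pos y \<in> C"
      using uvT unfolding C_def .
    show "Tb \<in> Ts" by (rule base(1))
    show "\<And>y. y \<in> Tb - {u, v} \<Longrightarrow> pos y \<in> C" using base(2) unfolding C_def .
    show "T \<in> Ts" by (rule Ty(1))
    show "y \<in> T - {u, v}" by (rule Ty(2))
  qed
  have "X \<subseteq> C"
  proof
    fix x assume "x \<in> X"
    then consider "x \<in> P" | y where "y \<in> \<Union>Ts - {u,v}" "x = pos y"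
      | e' where "e' \<in> \<Union>(tri_edges ` Ts)" "u \<notin> e'" "v \<notin> e'" "x \<in> path_image (c e')"
      unfolding X_def drawing_def by blast
    then show "x \<in> C"
    proof cases
      case 1 then show ?thesis using P unfolding C_def by blast
    next
      case 2 then show ?thesis using allv by blast
    next
      case 3
      then obtain T where T: "T \<in> Ts" "e' \<in> tri_edges T" by blast
      then have "card e' = 2" "e' \<subseteq> T" unfolding tri_edges_def by auto
      then obtain a where a: "a \<in> e'" by (metis card_2_iff insertI1)
      then have "a \<in> T - {u,v}" using 3 \<open>e' \<subseteq> T\<close> by blast
      then have "pos a \<in> C" using allv T by blast
      then show ?thesis using arcC[OF 3(1,2,3) a] 3(4) by blast
    qed
  qed
  moreover have "C \<subseteq> X" unfolding C_def by (rule connected_component_subset)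
  ultimately have "X = C" by blast
  then show ?thesis using connected_connected_component[of X \<beta>] unfolding C_def by simp
qed

end


lemma split_arc:
  fixes g :: "real \<Rightarrow> complex"
  assumes g: "arc g"
  obtains A0 A1 where "compact A0" "compact A1" "A0 \<union> A1 = path_image g" "A0 \<inter> A1 = {g (1/2)}"
    "g 1 \<notin> A0" "g 0 \<notin> A1"
proof -
  have inj: "inj_on g {0..1}" using g by (simp add: arc_def)
  have cont: "continuous_on {0..1} g" using g unfolding arc_def path_def by blast
  define A0 where "A0 = g ` {0..1/2}"
  define A1 where "A1 = g ` {1/2..1}"
  have "compact A0" unfolding A0_def
    by (rule compact_continuous_image[OF continuous_on_subset[OF cont]]) auto
  moreover have "compact A1" unfolding A1_def
    by (rule compact_continuous_image[OF continuous_on_subset[OF cont]]) auto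
  moreover have "A0 \<union> A1 = path_image g"
  proof -
    have "{0..1/2} \<union> {1/2..1} = {0..(1::real)}" by auto
    then show ?thesis unfolding A0_def A1_def path_image_def by (metis image_Un)
  qed
  moreover have "A0 \<inter> A1 = {g (1/2)}"
  proof
    show "A0 \<inter> A1 \<subseteq> {g (1/2)}"
    proof
      fix x assume "x \<in> A0 \<inter> A1"
      then obtain r s where rs: "r \<in> {0..1/2}" "s \<in> {1/2..1}" "x = g r" "x = g s"
        unfolding A0_def A1_def by blast
      then have "r = s" using inj_onD[OF inj, of r s] by auto
      then have r2: "r = 1/2" using rs by auto
      have "x = g (1/2)" using rs(3) r2 by (simp only:)
      then show "x \<in> {g (1/2)}" by simp
    qed
    show "{g (1/2)} \<subseteq> A0 \<inter> A1" unfolding A0_def A1_def by auto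
  qed
  moreover have "g 1 \<notin> A0"
  proof
    assume "g 1 \<in> A0"
    then obtain r where "r \<in> {0..1/2}" "g 1 = g r" unfolding A0_def by blast
    then have "1 = r" using inj_onD[OF inj, of 1 r] by auto
    then show False using \<open>r \<in> {0..1/2}\<close> by auto
  qed
  moreover have "g 0 \<notin> A1"
  proof
    assume "g 0 \<in> A1"
    then obtain r where "r \<in> {1/2..1}" "g 0 = g r" unfolding A1_def by blast
    then have "0 = r" using inj_onD[OF inj, of 0 r] by auto
    then show False using \<open>r \<in> {1/2..1}\<close> by auto
  qed
  ultimately show ?thesis using that by blast
qed

lemma jan_tail:
  fixes Bd S T f1 f2 :: "complex set"
  assumes S: "compact S" and T: "closed T" and ST: "connected (S \<inter> T)" and cov: "Bd \<subseteq> S \<union> T"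
    and f1: "f1 \<in> components (- Bd)" and f2: "f2 \<in> components (- Bd)" and ne: "f1 \<noteq> f2"
    and pu: "pu \<in> closure f1" "pu \<in> closure f2" and pv: "pv \<in> closure f1" "pv \<in> closure f2"
    and puS: "pu \<notin> S" and pvT: "pv \<notin> T"
    and dS: "S \<inter> f1 = {}" "S \<inter> f2 = {}" and dT: "T \<inter> f1 = {}" "T \<inter> f2 = {}"
  shows False
proof -
  obtain a where a: "a \<in> f1" using in_components_nonempty[OF f1] by blast
  obtain b where b: "b \<in> f2" using in_components_nonempty[OF f2] by blast
  have c1: "connected f1" using in_components_connected[OF f1] .
  have c2: "connected f2" using in_components_connected[OF f2] .
  have cins: "connected (insert p f)" if "connected f" "p \<in> closure f" for p :: complex and f :: "complex set"
    by (rule connected_intermediate_closure[OF that(1)]) (use that closure_subset in auto)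
  have cpath: "connected (insert p f1 \<union> insert p f2)" if "p \<in> closure f1" "p \<in> closure f2" for p
    using connected_Un[OF cins[OF c1 that(1)] cins[OF c2 that(2)]] by blast
  have "connected_component (- S) a b"
    unfolding connected_component_def
    by (rule exI[of _ "insert pu f1 \<union> insert pu f2"]) (use cpath[OF pu] puS dS a b in auto)
  moreover have "connected_component (- T) a b"
    unfolding connected_component_def
    by (rule exI[of _ "insert pv f1 \<union> insert pv f2"]) (use cpath[OF pv] pvT dT a b in auto)
  ultimately have "connected_component (- (S \<union> T)) a b"
    using Janiszewski[OF S T ST] by blast
  then have "connected_component (- Bd) a b"
    by (rule connected_component_of_subset) (use cov in blast)
  then have bC: "b \<in> connected_component_set (- Bd) a" by simp
  have "f1 = connected_component_set (- Bd) a"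
  proof -
    obtain x where "x \<in> - Bd" "f1 = connected_component_set (- Bd) x" using f1 components_iff by blast
    then show ?thesis using a connected_component_eq by blast
  qed
  then have "b \<in> f1" using bC by simp
  then have "f1 \<inter> f2 \<noteq> {}" using b by blast
  then show False using components_nonoverlap[OF f1 f2] ne by blast
qed


theorem lemma2p4:
  fixes V :: "'v set" and E :: "'v set set"
    and pos :: "'v \<Rightarrow> complex" and c :: "'v set \<Rightarrow> real \<Rightarrow> complex"
  assumes "plane_graph V E pos c"
    and "two_connected V E"
    and "e \<in> E"
    and "tri_block V E pos c e = (VB, EB)"
    and "facial_cycle VB EB pos c W1 D1"
    and "facial_cycle VB EB pos c W2 D2"
    and "(W1, D1) \<noteq> (W2, D2)"
    and "card D1 \<ge> 4" and "card D2 \<ge> 4"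
  shows "card (W1 \<inter> W2) \<le> 1"
proof (rule ccontr)
  assume nc: "\<not> card (W1 \<inter> W2) \<le> 1"
  interpret pg V E pos c by unfold_locales (rule assms(1))
  have W1VB: "W1 \<subseteq> VB" and D1EB: "D1 \<subseteq> EB" and cyc1: "is_cycle W1 D1"
    and ex1: "\<exists>f\<in>faces VB EB pos c. frontier f = drawing W1 D1 pos c"
    using assms(5) unfolding facial_cycle_def by blast+
  have W2VB: "W2 \<subseteq> VB" and D2EB: "D2 \<subseteq> EB" and cyc2: "is_cycle W2 D2"
    and ex2: "\<exists>f\<in>faces VB EB pos c. frontier f = drawing W2 D2 pos c"
    using assms(6) unfolding facial_cycle_def by blast+
  have finW1: "finite W1" and W13: "card W1 \<ge> 3" using cyc1 unfolding is_cycle_def by blast+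
  have "finite (W1 \<inter> W2)" using finW1 by simp
  then obtain u v where uv: "u \<in> W1" "u \<in> W2" "v \<in> W1" "v \<in> W2" "u \<noteq> v"
    using nc card_le_Suc0_iff_eq[of "W1 \<inter> W2"] by auto
  show False
  proof (cases "\<exists>T. facial_triangle V E pos c T \<and> e \<in> tri_edges T")
    case False
    then have "VB = e" using assms(4) unfolding tri_block_def by simp
    then have "W1 \<subseteq> e" using W1VB by simp
    moreover have "card e = 2" using edge2[OF assms(3)] .
    moreover have "finite e" using \<open>card e = 2\<close> by (intro card_ge_0_finite) simp
    ultimately have "card W1 \<le> 2" using card_mono by fastforce
    then show False using W13 by simp
  next
    case True
    define Ts where "Ts = {T'. \<exists>T. facial_triangle V E pos c T \<and> e \<in> tri_edges T \<and> tri_equiv V E pos c T T'}"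
    interpret blk V E pos c e Ts by unfold_locales (rule Ts_def)
    have VBeq: "VB = \<Union>Ts" and EBeq: "EB = \<Union>(tri_edges ` Ts)"
      using assms(4) True unfolding tri_block_def Ts_def Let_def by auto
    have VBV: "VB \<subseteq> V" using VB_sub VBeq by simp
    have EBE: "EB \<subseteq> E" using EB_sub EBeq by simp
    have EBin: "\<forall>x\<in>EB. x \<subseteq> VB" using EB_in VBeq EBeq by simp
    have finVB: "finite VB" using fin_VB VBeq by simp
    have finEB: "finite EB" using fin_EB EBeq by simp
    have uVB: "u \<in> VB" "v \<in> VB" using uv W1VB by auto
    have uV: "u \<in> V" "v \<in> V" using uVB VBV by auto
    have cw1: "\<forall>x\<in>D1. x \<subseteq> W1" using cyc1 unfolding is_cycle_def by blast
    have cw2: "\<forall>x\<in>D2. x \<subseteq> W2" using cyc2 unfolding is_cycle_def by blast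
    have W1V: "W1 \<subseteq> V" using W1VB VBV by blast
    have W2V: "W2 \<subseteq> V" using W2VB VBV by blast
    have D1E: "D1 \<subseteq> E" using D1EB EBE by blast
    have D2E: "D2 \<subseteq> E" using D2EB EBE by blast
    obtain f1 where f1: "f1 \<in> faces VB EB pos c" "frontier f1 = drawing W1 D1 pos c" using ex1 by blast
    obtain f2 where f2: "f2 \<in> faces VB EB pos c" "frontier f2 = drawing W2 D2 pos c" using ex2 by blast
    define Bd where "Bd = drawing VB EB pos c"
    have f1c: "f1 \<in> components (- Bd)" using f1(1) unfolding faces_def Bd_def .
    have f2c: "f2 \<in> components (- Bd)" using f2(1) unfolding faces_def Bd_def .
    have f1s: "f1 \<subseteq> - Bd" using faces_sub[OF f1(1)] unfolding Bd_def .
    have f2s: "f2 \<subseteq> - Bd" using faces_sub[OF f2(1)] unfolding Bd_def .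
    have ne: "f1 \<noteq> f2"
    proof
      assume "f1 = f2"
      then have deq: "drawing W1 D1 pos c = drawing W2 D2 pos c" using f1 f2 by simp
      have "W1 \<subseteq> W2" "D1 \<subseteq> D2" using drawing_eq_imp[OF W1V D1E cw1 W2V D2E cw2] deq by auto
      moreover have "W2 \<subseteq> W1" "D2 \<subseteq> D1" using drawing_eq_imp[OF W2V D2E cw2 W1V D1E cw1] deq by auto
      ultimately show False using assms(7) by auto
    qed
    have cl1: "pos x \<in> closure f1" if "x \<in> W1" for x
    proof -
      have "pos x \<in> drawing W1 D1 pos c" using that unfolding drawing_def by blast
      then have "pos x \<in> frontier f1" using f1(2) by simp
      then show ?thesis unfolding frontier_def by blast
    qed
    have cl2: "pos x \<in> closure f2" if "x \<in> W2" for x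
    proof -
      have "pos x \<in> drawing W2 D2 pos c" using that unfolding drawing_def by blast
      then have "pos x \<in> frontier f2" using f2(2) by simp
      then show ?thesis unfolding frontier_def by blast
    qed
    define Du where "Du = drawing (VB-{u}) {x\<in>EB. u\<notin>x} pos c"
    define Dv where "Dv = drawing (VB-{v}) {x\<in>EB. v\<notin>x} pos c"
    define Duv where "Duv = drawing (VB-{u,v}) {x\<in>EB. u\<notin>x \<and> v\<notin>x} pos c"
    have DuBd: "Du \<subseteq> Bd" unfolding Du_def Bd_def by (rule drawing_mono) auto
    have DvBd: "Dv \<subseteq> Bd" unfolding Dv_def Bd_def by (rule drawing_mono) auto
    have puDu: "pos u \<notin> Du" unfolding Du_def by (rule notin_Du[OF uV(1) VBV EBE])
    have pvDv: "pos v \<notin> Dv" unfolding Dv_def by (rule notin_Du[OF uV(2) VBV EBE])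
    have cDu: "compact Du" unfolding Du_def using finVB finEB EBE
      by (intro compact_drawing) auto
    have cDv: "compact Dv" unfolding Dv_def using finVB finEB EBE
      by (intro compact_drawing) auto
    have intD: "Du \<inter> Dv = Duv" unfolding Du_def Dv_def Duv_def by (rule sub_int[OF VBV EBE EBin])
    have cov: "Bd \<subseteq> Du \<union> Dv \<union> (\<Union>e\<in>{e\<in>EB. e = {u,v}}. path_image (c e))"
      unfolding Bd_def Du_def Dv_def by (rule sub_cover[OF VBV EBE uv(5)])
    note Xc = X_conn[unfolded VBeq[symmetric] EBeq[symmetric]]
    show False
    proof (cases "{u,v} \<in> EB")
      case False
      have cov': "Bd \<subseteq> Du \<union> Dv" using cov False by auto
      obtain T0 where T0: "facial_triangle V E pos c T0" "e \<in> tri_edges T0" using True by blast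
      have T0Ts: "T0 \<in> Ts" unfolding Ts_def tri_equiv_def using T0 by blast
      have T0p: "T0 \<subseteq> V" "tri_edges T0 \<subseteq> E" "card T0 = 3" using ft_props[OF T0(1)] by auto
      have nuv: "\<not> (u \<in> T0 \<and> v \<in> T0)"
      proof
        assume "u \<in> T0 \<and> v \<in> T0"
        then have "{u,v} \<in> tri_edges T0" unfolding tri_edges_def using uv(5) by auto
        then have "{u,v} \<in> EB" using T0Ts EBeq by blast
        then show False using False by simp
      qed
      have "T0 - {u,v} \<noteq> {}"
      proof
        assume "T0 - {u,v} = {}"
        then have "T0 \<subseteq> {u,v}" by blast
        then have "card T0 \<le> card {u,v}" by (intro card_mono) simp_all
        also have "\<dots> \<le> 2" by (simp add: card_insert_if)
        finally show False using T0p(3) by simp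
      qed
      then obtain xb where xb: "xb \<in> T0" "xb \<noteq> u" "xb \<noteq> v" by blast
      have conn: "connected (Duv \<union> {})"
        unfolding Duv_def
      proof (rule Xc[where \<beta> = "pos xb" and Tb = T0])
        show "{} \<subseteq> connected_component_set
          (drawing (VB - {u, v}) {x \<in> EB. u \<notin> x \<and> v \<notin> x} pos c \<union> {}) (pos xb)" by simp
        show "\<And>T y. T \<in> Ts \<Longrightarrow> u \<in> T \<Longrightarrow> v \<in> T \<Longrightarrow> y \<in> T - {u, v} \<Longrightarrow>
          pos y \<in> connected_component_set (drawing (VB - {u, v}) {x \<in> EB. u \<notin> x \<and> v \<notin> x} pos c \<union> {}) (pos xb)"
        proof -
          fix T y assume "T \<in> Ts" "u \<in> T" "v \<in> T"
          then have "{u,v} \<in> tri_edges T" unfolding tri_edges_def using uv(5) by auto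
          then have "{u,v} \<in> EB" using \<open>T \<in> Ts\<close> EBeq by blast
          then show "pos y \<in> connected_component_set (drawing (VB - {u, v}) {x \<in> EB. u \<notin> x \<and> v \<notin> x} pos c \<union> {}) (pos xb)"
            using False by simp
        qed
        show "T0 \<in> Ts" by (rule T0Ts)
        show "\<And>y. y \<in> T0 - {u, v} \<Longrightarrow>
          pos y \<in> connected_component_set (drawing (VB - {u, v}) {x \<in> EB. u \<notin> x \<and> v \<notin> x} pos c \<union> {}) (pos xb)"
        proof -
          fix y assume y: "y \<in> T0 - {u,v}"
          show "pos y \<in> connected_component_set (drawing (VB - {u, v}) {x \<in> EB. u \<notin> x \<and> v \<notin> x} pos c \<union> {}) (pos xb)"
          proof (cases "y = xb")
            case True
            have "xb \<in> VB" using xb T0Ts VBeq by blast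
            then have "pos xb \<in> drawing (VB - {u, v}) {x \<in> EB. u \<notin> x \<and> v \<notin> x} pos c"
              using xb unfolding drawing_def by blast
            then show ?thesis using True by simp
          next
            case False
            have ed: "{xb,y} \<in> tri_edges T0" unfolding tri_edges_def using False xb y by auto
            then have edB: "{xb,y} \<in> EB" using T0Ts EBeq by blast
            then have edE: "{xb,y} \<in> E" using EBE by blast
            have sub: "path_image (c {xb,y}) \<subseteq> drawing (VB - {u, v}) {x \<in> EB. u \<notin> x \<and> v \<notin> x} pos c \<union> {}"
              unfolding drawing_def using edB xb y by blast
            have "pos xb \<in> path_image (c {xb,y})" "pos y \<in> path_image (c {xb,y})"
              using end_in_arc[OF edE] by simp_all
            then show ?thesis using sub connected_arc[OF edE]
              unfolding connected_component_def mem_Collect_eq by blast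
          qed
        qed
      qed
      show False
      proof (rule jan_tail[OF cDu compact_imp_closed[OF cDv] _ cov' f1c f2c ne])
        show "connected (Du \<inter> Dv)" using conn intD by simp
        show "pos u \<in> closure f1" "pos u \<in> closure f2" using cl1 cl2 uv by auto
        show "pos v \<in> closure f1" "pos v \<in> closure f2" using cl1 cl2 uv by auto
        show "pos u \<notin> Du" by (rule puDu)
        show "pos v \<notin> Dv" by (rule pvDv)
        show "Du \<inter> f1 = {}" "Du \<inter> f2 = {}" "Dv \<inter> f1 = {}" "Dv \<inter> f2 = {}"
          using DuBd DvBd f1s f2s by blast+
      qed
    next
      case uvEB: True
      have Euv: "{u,v} \<in> E" using uvEB EBE by blast
      define m0 where "m0 = c {u,v} (1/2)"
      have m0i: "m0 \<in> inner_pts {u,v}" unfolding m0_def by (rule mid_inner[OF Euv])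
      have m0a: "m0 \<in> path_image (c {u,v})" using m0i unfolding inner_pts_def by blast
      have arcBd: "path_image (c {u,v}) \<subseteq> Bd" unfolding Bd_def drawing_def using uvEB by blast
      have m0u: "m0 \<noteq> pos u" "m0 \<noteq> pos v" using inner_notV[OF Euv m0i] uV by auto
      define UT where "UT = {T\<in>Ts. u \<in> T \<and> v \<in> T}"
      have finUT: "finite UT" unfolding UT_def using fin_Ts by simp
      have KT: "\<exists>K. compact K \<and> connected K \<and> (\<forall>y\<in>T-{u,v}. pos y \<in> K) \<and> m0 \<in> K \<and>
                 pos u \<notin> K \<and> pos v \<notin> K \<and> K \<inter> f1 = {} \<and> K \<inter> f2 = {}" if TU: "T \<in> UT" for T
      proof -
        have TTs: "T \<in> Ts" and uvT: "u \<in> T" "v \<in> T" using TU unfolding UT_def by auto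
        have ftT: "facial_triangle V E pos c T" using Ts_ft[OF TTs] .
        have Tp: "T \<subseteq> V" "tri_edges T \<subseteq> E" "card T = 3" using ft_props[OF ftT] by auto
        have finT: "finite T" using Tp(3) by (intro card_ge_0_finite) simp
        have "T - {u,v} \<noteq> {}"
        proof
          assume "T - {u,v} = {}"
          then have "T \<subseteq> {u,v}" by blast
          then have "card T \<le> card {u,v}" by (intro card_mono) simp_all
          also have "\<dots> \<le> 2" by (simp add: card_insert_if)
          finally show False using Tp(3) by simp
        qed
        then obtain w where w: "w \<in> T" "w \<noteq> u" "w \<noteq> v" by blast
        have sub: "{u,v,w} \<subseteq> T" using uvT w by auto
        have "card {u,v,w} = 3" using uv(5) w by (simp add: card_insert_if)
        then have Teq: "T = {u,v,w}" using card_subset_eq[OF finT sub] Tp(3) by simp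
        obtain t where t: "t \<in> faces V E pos c" "frontier t = drawing T (tri_edges T) pos c"
          using ftT unfolding facial_triangle_def facial_cycle_def by blast
        obtain K where K: "compact K" "connected K" "pos w \<in> K" "c {u,v} (1/2) \<in> K"
          "pos u \<notin> K" "pos v \<notin> K" "K \<subseteq> path_image (c {v,w}) \<union> path_image (c {u,v}) \<union> t"
          using link_tri[OF ftT Teq uv(5) w(3)[symmetric] w(2)[symmetric] t] by blast
        have TVB: "T \<subseteq> VB" using TTs VBeq by blast
        have TEB: "tri_edges T \<subseteq> EB" using TTs EBeq by blast
        have t1: "t \<inter> f1 = {}"
          by (rule tri_face_disj[OF ftT t VBV EBE finVB TVB TEB f1(1) f1(2) cyc1 W1VB D1EB assms(8)])
        have t2: "t \<inter> f2 = {}"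
          by (rule tri_face_disj[OF ftT t VBV EBE finVB TVB TEB f2(1) f2(2) cyc2 W2VB D2EB assms(9)])
        have "{v,w} \<in> tri_edges T" unfolding tri_edges_def using Teq w by auto
        then have "{v,w} \<in> EB" using TEB by blast
        then have a1: "path_image (c {v,w}) \<subseteq> Bd" unfolding Bd_def drawing_def by blast
        have "K \<subseteq> Bd \<union> t" using K(7) a1 arcBd by blast
        then have "K \<inter> f1 = {}" "K \<inter> f2 = {}" using t1 t2 f1s f2s by blast+
        moreover have "\<forall>y\<in>T-{u,v}. pos y \<in> K" using Teq K(3) by auto
        ultimately show ?thesis using K m0_def by blast
      qed
      then have KT2: "\<forall>T\<in>UT. \<exists>K. compact K \<and> connected K \<and> (\<forall>y\<in>T-{u,v}. pos y \<in> K) \<and> m0 \<in> K \<and>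
                 pos u \<notin> K \<and> pos v \<notin> K \<and> K \<inter> f1 = {} \<and> K \<inter> f2 = {}" by blast
      obtain Kf where Kf: "\<forall>T\<in>UT. compact (Kf T) \<and> connected (Kf T) \<and> (\<forall>y\<in>T-{u,v}. pos y \<in> Kf T) \<and> m0 \<in> Kf T \<and>
                 pos u \<notin> Kf T \<and> pos v \<notin> Kf T \<and> Kf T \<inter> f1 = {} \<and> Kf T \<inter> f2 = {}"
        using bchoice[OF KT2] by blast
      define P where "P = \<Union>(insert {m0} (Kf ` UT))"
      have cP: "compact P" unfolding P_def using Kf finUT by (intro compact_Union) auto
      have conP: "connected P" unfolding P_def
      proof (rule connected_Union)
        show "\<And>s. s \<in> insert {m0} (Kf ` UT) \<Longrightarrow> connected s" using Kf by auto
        show "\<Inter> (insert {m0} (Kf ` UT)) \<noteq> {}" using Kf by auto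
      qed
      have m0P: "m0 \<in> P" unfolding P_def by simp
      have puP: "pos u \<notin> P" "pos v \<notin> P" unfolding P_def using Kf m0u by auto
      have Pf: "P \<inter> f1 = {}" "P \<inter> f2 = {}" unfolding P_def using Kf m0a arcBd f1s f2s by blast+
      obtain Au Av where A: "compact Au" "compact Av" "Au \<union> Av = path_image (c {u,v})" "Au \<inter> Av = {m0}"
        "pos v \<notin> Au" "pos u \<notin> Av"
      proof -
        obtain A0 A1 where A01: "compact A0" "compact A1" "A0 \<union> A1 = path_image (c {u,v})"
          "A0 \<inter> A1 = {c {u,v} (1/2)}" "c {u,v} 1 \<notin> A0" "c {u,v} 0 \<notin> A1"
          using split_arc[OF arcc[OF Euv]] by blast
        have en: "{c {u,v} 0, c {u,v} 1} = {pos u, pos v}"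
          using ends[OF Euv] unfolding pathstart_def pathfinish_def by simp
        have puv: "pos u \<noteq> pos v" using pos_eq[OF uV] uv(5) by simp
        show ?thesis
        proof (cases "c {u,v} 0 = pos u")
          case True
          then have "c {u,v} 1 = pos v" using en puv by (auto simp: doubleton_eq_iff)
          then show ?thesis using that[of A0 A1] A01 True m0_def by auto
        next
          case False
          then have "c {u,v} 0 = pos v" "c {u,v} 1 = pos u" using en puv by (auto simp: doubleton_eq_iff)
          then show ?thesis using that[of A1 A0] A01 m0_def by auto
        qed
      qed
      define S where "S = Du \<union> P \<union> Av"
      define T where "T = Dv \<union> P \<union> Au"
      have cS: "compact S" unfolding S_def using cDu cP A by (intro compact_Un) auto
      have cT: "closed T" unfolding T_def using cDv cP A by (intro closed_Un compact_imp_closed) auto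
      have Avarc: "Av \<subseteq> path_image (c {u,v})" "Au \<subseteq> path_image (c {u,v})" using A(3) by auto
      have STeq: "S \<inter> T = Duv \<union> P"
      proof
        show "Duv \<union> P \<subseteq> S \<inter> T" unfolding S_def T_def using intD by blast
        show "S \<inter> T \<subseteq> Duv \<union> P"
        proof
          fix x assume x: "x \<in> S \<inter> T"
          show "x \<in> Duv \<union> P"
          proof (cases "x \<in> P")
            case True then show ?thesis by simp
          next
            case False
            then have xs: "x \<in> Du \<or> x \<in> Av" "x \<in> Dv \<or> x \<in> Au" using x unfolding S_def T_def by auto
            have nDuAu: "x \<notin> Du \<or> x \<notin> Au"
            proof (rule ccontr)
              assume "\<not> (x \<notin> Du \<or> x \<notin> Au)"
              then have "x \<in> Du" "x \<in> Au" by auto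
              then have "x = pos v" using arc_meet_Du[OF VBV EBE uv(5) uvEB] Avarc unfolding Du_def by blast
              then show False using A(5) \<open>x \<in> Au\<close> by simp
            qed
            have nAvDv: "x \<notin> Av \<or> x \<notin> Dv"
            proof (rule ccontr)
              assume "\<not> (x \<notin> Av \<or> x \<notin> Dv)"
              then have xx: "x \<in> Av" "x \<in> Dv" by auto
              have vu: "{v,u} = {u,v}" by auto
              have "x = pos u" using arc_meet_Du[OF VBV EBE uv(5)[symmetric], of x] uvEB xx Avarc vu
                unfolding Dv_def by auto
              then show False using A(6) xx by simp
            qed
            have nAvAu: "x \<notin> Av \<or> x \<notin> Au"
            proof (rule ccontr)
              assume "\<not> (x \<notin> Av \<or> x \<notin> Au)"
              then have "x \<in> Au \<inter> Av" by auto
              then have "x = m0" using A(4) by auto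
              then show False using m0P False by simp
            qed
            have "x \<in> Du \<inter> Dv" using xs nDuAu nAvDv nAvAu by blast
            then show ?thesis using intD by blast
          qed
        qed
      qed
      obtain Tb where Tb: "Tb \<in> Ts" "{u,v} \<in> tri_edges Tb" using uvEB EBeq by blast
      have Tbuv: "u \<in> Tb" "v \<in> Tb" using Tb(2) unfolding tri_edges_def by auto
      have conn: "connected (Duv \<union> P)"
        unfolding Duv_def
      proof (rule Xc[where \<beta> = m0 and Tb = Tb])
        have PX: "P \<subseteq> drawing (VB - {u, v}) {x \<in> EB. u \<notin> x \<and> v \<notin> x} pos c \<union> P" by blast
        show Pc: "P \<subseteq> connected_component_set (drawing (VB - {u, v}) {x \<in> EB. u \<notin> x \<and> v \<notin> x} pos c \<union> P) m0"
          by (rule connected_component_maximal[OF m0P conP PX])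
        show uvT: "\<And>T y. T \<in> Ts \<Longrightarrow> u \<in> T \<Longrightarrow> v \<in> T \<Longrightarrow> y \<in> T - {u, v} \<Longrightarrow>
          pos y \<in> connected_component_set (drawing (VB - {u, v}) {x \<in> EB. u \<notin> x \<and> v \<notin> x} pos c \<union> P) m0"
        proof -
          fix T y assume "T \<in> Ts" "u \<in> T" "v \<in> T" "y \<in> T - {u,v}"
          then have "T \<in> UT" unfolding UT_def by blast
          then have "pos y \<in> Kf T" using Kf \<open>y \<in> T - {u,v}\<close> by blast
          then have "pos y \<in> P" unfolding P_def using \<open>T \<in> UT\<close> by blast
          then show "pos y \<in> connected_component_set (drawing (VB - {u, v}) {x \<in> EB. u \<notin> x \<and> v \<notin> x} pos c \<union> P) m0"
            using Pc by blast
        qed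
        show "Tb \<in> Ts" by (rule Tb(1))
        show "\<And>y. y \<in> Tb - {u, v} \<Longrightarrow>
          pos y \<in> connected_component_set (drawing (VB - {u, v}) {x \<in> EB. u \<notin> x \<and> v \<notin> x} pos c \<union> P) m0"
          using uvT[OF Tb(1) Tbuv] .
      qed
      have cov2: "Bd \<subseteq> S \<union> T" using cov A(3) unfolding S_def T_def by auto
      show False
      proof (rule jan_tail[OF cS cT _ cov2 f1c f2c ne])
        show "connected (S \<inter> T)" using conn STeq by simp
        show "pos u \<in> closure f1" "pos u \<in> closure f2" using cl1 cl2 uv by auto
        show "pos v \<in> closure f1" "pos v \<in> closure f2" using cl1 cl2 uv by auto
        show "pos u \<notin> S" unfolding S_def using puDu puP A(6) by blast
        show "pos v \<notin> T" unfolding T_def using pvDv puP A(5) by blast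
        show "S \<inter> f1 = {}" "S \<inter> f2 = {}" unfolding S_def
          using DuBd Pf Avarc arcBd f1s f2s by blast+
        show "T \<inter> f1 = {}" "T \<inter> f2 = {}" unfolding T_def
          using DvBd Pf Avarc arcBd f1s f2s by blast+
      qed
    qed
  qed
qed

end
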